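(* Let $S$ be a free numerical semigroup that is reflective (allowing $S=\mathbb{N}_0$). Then $S=\langle A\rangle$ for a minimal telescopic set $A$ equal to one of: (1) $A=\{1\}$ (genus $0$); (2) $A=\{2,4n+3\}$ for some $n\in\mathbb{N}_0$ (genus $2n+1$); (3) $A=\{3,3n+2\}$ for some $n\in\mathbb{N}_0$ (genus $3n+1$); (4) $A=\{4,4n+2,4n+3\}$ for some $n\in\mathbb{N}_0$ (genus $4n+1$).
   Context: A numerical semigroup is a submonoid $S$ of $(\mathbb{N}_0,+)$ with finite complement; its genus is the number of elements of $\mathbb{N}_0\setminus S$. For a sequence $A=(a_1,\dots,a_k)$ of non-negative integers, let $d_i=\gcd(a_1,\dots,a_i)$, $S_i=\langle a_1,\dots,a_i\rangle$ (the set of $\mathbb{N}_0$-linear combinations), and $c_j=d_{j-1}/d_j$ for $j\ge2$; $A$ is telescopic if $c_ja_j\in S_{j-1}$ for all $j\in\{2,\dots,k\}$. A set is telescopic if it can be ordered into a telescopic sequence. $S$ is free if $S=\langle A\rangle$ for some telescopic set $A$. A numerical semigroup $S$ of genus $g\ge1$ is called reflective if for every $z\in\{0,1,\dots,g-1\}$ exactly one of $z$ and $z+g$ belongs to $S$; $\mathbb{N}_0$ is also considered reflective. *)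

theory Defs
  imports Main
begin

inductive_set gen :: "nat set \<Rightarrow> nat set" for A :: "nat set" where
  gen_zero: "0 \<in> gen A"
| gen_add: "a \<in> A \<Longrightarrow> x \<in> gen A \<Longrightarrow> a + x \<in> gen A"

definition numerical_semigroup :: "nat set \<Rightarrow> bool" where
  "numerical_semigroup S \<longleftrightarrow>
     0 \<in> S \<and> (\<forall>x\<in>S. \<forall>y\<in>S. x + y \<in> S) \<and> finite (UNIV - S)"

definition genus :: "nat set \<Rightarrow> nat" where
  "genus S = card (UNIV - S)"

text \<open>For a sequence as = (a_1,...,a_k) (0-indexed list), d_i = gcd(a_1..a_i),
  S_i = <a_1..a_i>, c_j = d_{j-1} div d_j; telescopic iff c_j a_j \<in> S_{j-1} for 2 \<le> j \<le> k.\<close>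
definition seq_gcd :: "nat list \<Rightarrow> nat \<Rightarrow> nat" where
  "seq_gcd as i = Gcd (set (take i as))"

definition telescopic_seq :: "nat list \<Rightarrow> bool" where
  "telescopic_seq as \<longleftrightarrow>
     (\<forall>j. 2 \<le> j \<and> j \<le> length as \<longrightarrow>
        (seq_gcd as (j - 1) div seq_gcd as j) * (as ! (j - 1)) \<in> gen (set (take (j - 1) as)))"

definition telescopic_set :: "nat set \<Rightarrow> bool" where
  "telescopic_set A \<longleftrightarrow> (\<exists>as. distinct as \<and> set as = A \<and> telescopic_seq as)"

definition free_semigroup :: "nat set \<Rightarrow> bool" where
  "free_semigroup S \<longleftrightarrow> (\<exists>A. telescopic_set A \<and> S = gen A)"

definition reflective :: "nat set \<Rightarrow> bool" where
  "reflective S \<longleftrightarrow> S = UNIV \<or>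
     (genus S \<ge> 1 \<and> (\<forall>z < genus S. (z \<in> S) \<noteq> (z + genus S \<in> S)))"

definition minimal_generating_set :: "nat set \<Rightarrow> nat set \<Rightarrow> bool" where
  "minimal_generating_set A S \<longleftrightarrow> gen A = S \<and> (\<forall>B. B \<subset> A \<longrightarrow> gen B \<noteq> S)"

end

theory Submission
  imports Defs
begin


lemma gen_closed: "x \<in> gen A \<Longrightarrow> y \<in> gen A \<Longrightarrow> x + y \<in> gen A"
  by (induction x rule: gen.induct) (auto simp: add.assoc intro: gen.gen_add)

lemma gen_base: "a \<in> A \<Longrightarrow> a \<in> gen A"
  using gen.gen_add[of a A 0] gen.gen_zero by simp

lemma gen_mult: "a \<in> A \<Longrightarrow> k * a \<in> gen A"
  by (induction k) (auto intro: gen.gen_zero gen.gen_add simp: add.commute)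

lemma gen_mono: "A \<subseteq> B \<Longrightarrow> gen A \<subseteq> gen B"
proof
  fix x assume AB: "A \<subseteq> B" and "x \<in> gen A" from this(2) show "x \<in> gen B"
    by (induction x rule: gen.induct) (use AB in \<open>auto intro: gen.intros\<close>)
qed

lemma gen_subset: "A \<subseteq> S \<Longrightarrow> 0 \<in> S \<Longrightarrow> (\<forall>x\<in>S. \<forall>y\<in>S. x + y \<in> S) \<Longrightarrow> gen A \<subseteq> S"
proof
  fix x assume h: "A \<subseteq> S" "0 \<in> S" "\<forall>x\<in>S. \<forall>y\<in>S. x + y \<in> S" and "x \<in> gen A"
  from this(4) show "x \<in> S" by (induction x rule: gen.induct) (use h in auto)
qed

lemma gen_dvd: assumes "\<forall>a\<in>A. d dvd a" "x \<in> gen A" shows "d dvd x"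
  using assms(2) by (induction x rule: gen.induct) (use assms(1) in auto)

lemma gen_insert_red: "x \<in> gen A \<Longrightarrow> gen (insert x A) = gen A"
proof
  assume x: "x \<in> gen A"
  show "gen (insert x A) \<subseteq> gen A"
  proof
    fix y assume "y \<in> gen (insert x A)" then show "y \<in> gen A"
      by (induction y rule: gen.induct) (auto intro: gen.intros gen_closed x)
  qed
  show "gen A \<subseteq> gen (insert x A)" by (rule gen_mono) auto
qed

lemma gen_descent:
  assumes "\<forall>b\<in>B. d dvd b" "x \<in> gen (insert a B)"
  shows "d dvd x \<or> (a \<le> x \<and> x - a \<in> gen (insert a B))"
  using assms(2)
proof (induction x rule: gen.induct)
  case gen_zero then show ?case by simp
next
  case (gen_add a' x)
  show ?case
  proof (cases "a' = a")
    case True then show ?thesis using gen_add by auto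
  next
    case False
    then have "d dvd a'" "a' \<in> insert a B" using gen_add assms(1) by auto
    from gen_add.IH show ?thesis
    proof
      assume "d dvd x" then show ?thesis using \<open>d dvd a'\<close> by auto
    next
      assume h: "a \<le> x \<and> x - a \<in> gen (insert a B)"
      then have "a' + (x - a) \<in> gen (insert a B)" using gen.gen_add[OF \<open>a' \<in> insert a B\<close>] by blast
      moreover have "a' + (x - a) = a' + x - a" using h by simp
      ultimately show ?thesis using h by auto
    qed
  qed
qed

lemma seq_gcd_take_mono:
  assumes "j \<le> i" "seq_gcd as j = 1" shows "seq_gcd as i = 1"
proof -
  have "set (take j as) \<subseteq> set (take i as)" using assms(1) by (rule set_take_subset_set_take)
  then have "Gcd (set (take i as)) dvd Gcd (set (take j as))" by (meson Gcd_dvd Gcd_greatest subsetD)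
  then show ?thesis using assms(2) unfolding seq_gcd_def by simp
qed

lemma free_decomp:
  assumes tel: "telescopic_seq as" and g1: "Gcd (set as) = 1" and n1: "1 \<notin> set as"
  shows "\<exists>d a B. d \<ge> 2 \<and> coprime a d \<and> (\<forall>b\<in>B. d dvd b) \<and> gen (set as) = gen (insert a B)"
proof -
  define k where "k = length as"
  have gk: "seq_gcd as k = 1" using g1 unfolding seq_gcd_def k_def by simp
  define j where "j = (LEAST j. seq_gcd as j = 1)"
  have gj: "seq_gcd as j = 1" unfolding j_def by (rule LeastI[of _ k]) (rule gk)
  have jk: "j \<le> k" unfolding j_def by (rule Least_le) (rule gk)
  have j0: "j \<noteq> 0" proof assume "j = 0" then show False using gj unfolding seq_gcd_def by simp qed
  define d where "d = seq_gcd as (j - 1)"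
  define a where "a = as ! (j - 1)"
  define B where "B = set (take (j - 1) as)"
  have dn1: "d \<noteq> 1" unfolding d_def using not_less_Least[of "j-1" "\<lambda>j. seq_gcd as j = 1"] j0
    unfolding j_def by auto
  have jlen: "j - 1 < length as" using jk j0 k_def by simp
  have tj: "take j as = take (j - 1) as @ [a]"
    using take_Suc_conv_app_nth[OF jlen] j0 unfolding a_def by simp
  have setj: "set (take j as) = insert a B" using tj unfolding B_def by auto
  have gad: "gcd a d = 1" using gj setj unfolding d_def B_def seq_gcd_def by simp
  have "d \<noteq> 0"
  proof
    assume "d = 0" then have "a = 1" using gad by simp
    moreover have "a \<in> set as" unfolding a_def using jlen by simp
    ultimately show False using n1 by simp
  qed
  with dn1 have d2: "d \<ge> 2" by simp
  have Bd: "\<forall>b\<in>B. d dvd b" unfolding d_def B_def seq_gcd_def by auto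
  have step: "\<forall>i. j + i \<le> k \<longrightarrow> gen (set (take (j + i) as)) = gen (insert a B)"
  proof
    fix i show "j + i \<le> k \<longrightarrow> gen (set (take (j + i) as)) = gen (insert a B)"
    proof (induction i)
      case 0 then show ?case using setj by simp
    next
      case (Suc i)
      show ?case
      proof
        assume le: "j + Suc i \<le> k"
        then have IH: "gen (set (take (j + i) as)) = gen (insert a B)" using Suc by simp
        have l1: "seq_gcd as (j + i) = 1" by (rule seq_gcd_take_mono[OF _ gj]) simp
        have l2: "seq_gcd as (j + i + 1) = 1" by (rule seq_gcd_take_mono[OF _ gj]) simp
        have tl: "\<forall>j'. 2 \<le> j' \<and> j' \<le> length as \<longrightarrow>
          (seq_gcd as (j' - 1) div seq_gcd as j') * (as ! (j' - 1)) \<in> gen (set (take (j' - 1) as))"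
          using tel unfolding telescopic_seq_def .
        have "2 \<le> j + i + 1 \<and> j + i + 1 \<le> length as" using le j0 k_def by simp
        from tl[rule_format, OF this]
        have "(seq_gcd as (j + i + 1 - 1) div seq_gcd as (j + i + 1)) * (as ! (j + i + 1 - 1))
              \<in> gen (set (take (j + i + 1 - 1) as))" .
        then have mem: "as ! (j + i) \<in> gen (set (take (j + i) as))" using l1 l2 by simp
        have "take (j + Suc i) as = take (j + i) as @ [as ! (j + i)]"
          using take_Suc_conv_app_nth[of "j+i" as] le k_def by simp
        then have "set (take (j + Suc i) as) = insert (as ! (j + i)) (set (take (j + i) as))" by auto
        then show "gen (set (take (j + Suc i) as)) = gen (insert a B)"
          using gen_insert_red[OF mem] IH by simp
      qed
    qed
  qed
  have "gen (set as) = gen (insert a B)"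
    using step[rule_format, of "k - j"] jk k_def by simp
  then show ?thesis using d2 gad Bd by (auto simp: coprime_iff_gcd_eq_1)
qed



lemma dv: "(d::nat) dvd x \<Longrightarrow> d dvd y \<Longrightarrow> y = x + k \<Longrightarrow> d dvd k"
  by (simp add: dvd_add_right_iff)

locale reflS =
  fixes S :: "nat set" and g :: nat
  assumes z: "0 \<in> S" and cl: "\<And>x y. x \<in> S \<Longrightarrow> y \<in> S \<Longrightarrow> x + y \<in> S"
    and fin: "finite (UNIV - S)"
    and gdef: "g = card (UNIV - S)" and g1: "g \<ge> 1"
    and rf: "\<And>z. z < g \<Longrightarrow> (z \<in> S) \<noteq> (z + g \<in> S)"
begin

lemma big: assumes "2 * g \<le> x" shows "x \<in> S"
proof -
  define G where "G = UNIV - S"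
  define f where "f = (\<lambda>z. if z \<in> S then z + g else z)"
  have inj: "inj_on f {..<g}"
  proof (rule inj_onI)
    fix x y assume xy: "x \<in> {..<g}" "y \<in> {..<g}" "f x = f y"
    show "x = y"
    proof (cases "x \<in> S"; cases "y \<in> S")
      assume "x \<in> S" "y \<in> S" then show ?thesis using xy unfolding f_def by simp
    next
      assume "x \<in> S" "y \<notin> S" then show ?thesis using xy unfolding f_def by simp
    next
      assume "x \<notin> S" "y \<in> S" then show ?thesis using xy unfolding f_def by simp
    next
      assume "x \<notin> S" "y \<notin> S" then show ?thesis using xy unfolding f_def by simp
    qed
  qed
  have img: "f ` {..<g} = G \<inter> {..<2*g}"
  proof
    show "f ` {..<g} \<subseteq> G \<inter> {..<2*g}"
    proof
      fix y assume "y \<in> f ` {..<g}"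
      then obtain z where zz0: "z \<in> {..<g}" "y = f z" by (rule imageE)
      then have zz: "z < g" "y = f z" by simp_all
      show "y \<in> G \<inter> {..<2*g}"
      proof (cases "z \<in> S")
        case True then have "z + g \<notin> S" using rf[OF zz(1)] by simp
        then show ?thesis using zz True unfolding f_def G_def by simp
      next
        case False then show ?thesis using zz unfolding f_def G_def by simp
      qed
    qed
    show "G \<inter> {..<2*g} \<subseteq> f ` {..<g}"
    proof
      fix y assume y: "y \<in> G \<inter> {..<2*g}"
      show "y \<in> f ` {..<g}"
      proof (cases "y < g")
        case True
        then have "y \<notin> S" using y unfolding G_def by simp
        then have "f y = y" unfolding f_def by simp
        then show ?thesis using True by (metis imageI lessThan_iff)
      next
        case False
        have "y < 2*g" using y by simp
        then have "y - g < g" "y - g + g = y" using False by arith+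
        moreover have "y \<notin> S" using y unfolding G_def by simp
        ultimately have "y - g \<in> S" using rf[of "y-g"] by simp
        then have "f (y - g) = y" unfolding f_def using \<open>y - g + g = y\<close> by simp
        then show ?thesis using \<open>y - g < g\<close> by (metis imageI lessThan_iff)
      qed
    qed
  qed
  have "card (G \<inter> {..<2*g}) = g" using card_image[OF inj] img by simp
  moreover have "card G = g" using gdef G_def by simp
  moreover have "finite G" using fin G_def by simp
  ultimately have "G \<inter> {..<2*g} = G"
    using card_subset_eq[of G "G \<inter> {..<2*g}"] by simp
  moreover have "x \<notin> {..<2*g}" using assms by simp
  ultimately have "x \<notin> G" by blast
  then show ?thesis unfolding G_def by simp
qed

lemma gnot: "g \<notin> S" using rf[of 0] z g1 by simp

lemma mult: "x \<in> S \<Longrightarrow> k * x \<in> S"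
proof (induction k)
  case 0 then show ?case using z by simp
next
  case (Suc k) then show ?case using cl[of x "k*x"] by simp
qed

definition m where "m = (LEAST x. 0 < x \<and> x \<in> S)"

lemma m_props: "0 < m" "m \<in> S" "\<And>x. 0 < x \<Longrightarrow> x < m \<Longrightarrow> x \<notin> S" "\<And>x. 0 < x \<Longrightarrow> x \<in> S \<Longrightarrow> m \<le> x"
proof -
  have ex: "0 < 2*g \<and> 2*g \<in> S" using g1 big by simp
  show "0 < m" "m \<in> S" using LeastI[of "\<lambda>x. 0 < x \<and> x \<in> S", OF ex] unfolding m_def by auto
  show "\<And>x. 0 < x \<Longrightarrow> x \<in> S \<Longrightarrow> m \<le> x" unfolding m_def by (rule Least_le) simp
  then show "\<And>x. 0 < x \<Longrightarrow> x < m \<Longrightarrow> x \<notin> S" using not_le by blast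
qed

lemma m_ndvd_g: "\<not> m dvd g"
proof
  assume "m dvd g" then obtain k where "g = m * k" by (rule dvdE)
  then show False using mult[OF m_props(2), of k] gnot by (simp add: mult.commute)
qed

lemma m2: "m \<ge> 2"
proof -
  have "m \<noteq> 1" using m_ndvd_g by auto
  then show ?thesis using m_props(1) by simp
qed

lemma struct: assumes "x < g" shows "x \<in> S \<longleftrightarrow> m dvd x"
proof
  show "m dvd x \<Longrightarrow> x \<in> S" using mult[OF m_props(2)] by (auto simp: mult.commute elim!: dvdE)
  show "x \<in> S \<Longrightarrow> m dvd x" using assms
  proof (induction x rule: less_induct)
    case (less x)
    show ?case
    proof (cases "x < m")
      case True then have "x = 0" using m_props(3)[of x] less by auto
      then show ?thesis by simp
    next
      case False
      have "x - m \<in> S"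
      proof (rule ccontr)
        assume "x - m \<notin> S"
        then have "x - m + g \<in> S" using rf[of "x-m"] less by auto
        then have "x - m + g + m \<in> S" using cl m_props(2) by blast
        moreover have "x - m + g + m = x + g" using False by simp
        ultimately show False using rf[of x] less by auto
      qed
      moreover have "x - m < x" using False m_props(1) by simp
      ultimately have "m dvd x - m" using less.IH less.prems by simp
      moreover have "x = (x - m) + m" using False by simp
      ultimately show ?thesis by (metis dvd_add dvd_refl)
    qed
  qed
qed

lemma upper: assumes "g \<le> x" "x < 2*g" shows "x \<in> S \<longleftrightarrow> x - g \<notin> S"
  using rf[of "x - g"] assms by auto

end



context reflS
begin

lemma h_up: assumes "g < x" "x < g + m" shows "x \<in> S"
proof (cases "x < 2*g")
  case True
  have "x - g \<notin> S" using m_props(3)[of "x-g"] assms by simp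
  then show ?thesis using upper[of x] assms True by simp
next
  case False then show ?thesis using big by simp
qed

lemma classify:
  assumes d2: "d \<ge> 2" and cop: "coprime a d" and aS: "a \<in> S"
    and desc: "\<And>s. s \<in> S \<Longrightarrow> \<not> d dvd s \<Longrightarrow> a \<le> s \<and> s - a \<in> S"
  shows "(g = 1 \<and> g \<le> m) \<or> (m < g \<and> m \<le> 4 \<and> m dvd g - 1)"
proof -
  have hgap: "d dvd y + a" if "y \<notin> S" "y + a \<in> S" for y
  proof (rule ccontr)
    assume "\<not> d dvd y + a"
    then have "y + a - a \<in> S" using desc[OF that(2)] by simp
    then show False using that(1) by simp
  qed
  have d1: "\<not> d dvd 1" using d2 by simp
  have a0: "0 < a" using cop d2 by (cases "a = 0") auto
  have am: "m \<le> a" using m_props(4)[OF a0 aS] .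
  show ?thesis
  proof (cases "g \<le> m")
    case True
    have "g = 1"
    proof (rule ccontr)
      assume "g \<noteq> 1" then have g2: "g \<ge> 2" using g1 by simp
      have n1: "1 \<notin> S" using m_props(3)[of 1] True g2 by simp
      have n2: "2 \<notin> S"
      proof (cases "g = 2")
        case True then show ?thesis using gnot by simp
      next
        case False then show ?thesis using m_props(3)[of 2] \<open>g \<le> m\<close> g2 by simp
      qed
      have "a \<noteq> g" using aS gnot by auto
      then have ag: "g < a" using am True by simp
      have "1 + a \<in> S"
      proof (cases "1 + a < g + m")
        case True then show ?thesis using h_up[of "1+a"] ag by simp
      next
        case False then show ?thesis using big[of "1+a"] \<open>g \<le> m\<close> by simp
      qed
      then have e1: "d dvd 1 + a" using hgap[OF n1] by simp
      have "2 + a \<in> S"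
      proof (cases "2 + a < g + m")
        case True then show ?thesis using h_up[of "2+a"] ag by simp
      next
        case False then show ?thesis using big[of "2+a"] \<open>g \<le> m\<close> by simp
      qed
      then have e2: "d dvd 2 + a" using hgap[OF n2] by simp
      have "d dvd 1" using e1 e2 by (rule dv[of d "1+a" "2+a" 1]) simp
      then show False using d1 by simp
    qed
    then show ?thesis using True by simp
  next
    case False
    then have mg: "m < g" by simp
    show ?thesis
    proof (cases "g \<le> a")
      case True
      have "a \<noteq> g" using aS gnot by auto
      then have ag: "g < a" using True by simp
      have A1: "d dvd g + a" using hgap[OF gnot] big[of "g+a"] ag by simp
      have A2: "m dvd g - 1"
      proof (rule ccontr)
        assume nd: "\<not> m dvd g - 1"
        have "g - 1 \<notin> S" using struct[of "g-1"] nd g1 by simp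
        moreover have "g - 1 + a \<in> S" using big[of "g - 1 + a"] ag by simp
        ultimately have "d dvd g - 1 + a" by (rule hgap)
        then have "d dvd 1" using A1 by (rule dv[of d "g-1+a" "g+a" 1]) (use g1 in arith)
        then show False using d1 by simp
      qed
      have A3: "d dvd m"
      proof -
        have "m + g \<notin> S" using rf[OF mg] m_props(2) by simp
        moreover have "m + g + a \<in> S" using big[of "m + g + a"] ag by simp
        ultimately have "d dvd m + g + a" by (rule hgap)
        with A1 show ?thesis by (rule dv[of d "g+a" "m+g+a" m]) simp
      qed
      have m4: "m \<le> 4"
      proof (rule ccontr)
        assume "\<not> m \<le> 4" then have m5: "m \<ge> 5" by simp
        have dg: "d dvd g - 1" using dvd_trans[OF A3 A2] .
        have da: "d dvd a + 1" using dg A1 by (rule dv[of d "g-1" "g+a" "a+1"]) (use g1 in arith)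
        have gp: "d dvd y + a \<or> m dvd y + a - g" if "0 < y" "y < m" for y
        proof (cases "d dvd y + a")
          case True then show ?thesis by simp
        next
          case nd: False
          have yS: "y \<notin> S" using m_props(3) that by simp
          have "y + a \<notin> S" using hgap[OF yS] nd by blast
          then have "y + a < 2 * g" using big[of "y+a"] by linarith
          then have "y + a - g \<in> S" using upper[of "y+a"] ag \<open>y + a \<notin> S\<close> by simp
          moreover have "y + a - g < g" using \<open>y + a < 2*g\<close> by simp
          ultimately show ?thesis using struct[of "y + a - g"] by simp
        qed
        have "\<not> d dvd 2 + a" proof assume "d dvd 2 + a" with da have "d dvd 1" by (rule dv[of d "a+1" "2+a" 1]) simp with d1 show False by simp qed
        then have M2: "m dvd 2 + a - g" using gp[of 2] m5 by simp
        show False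
        proof (cases "d dvd 3 + a")
          case True
          have "d dvd 2" using da True by (rule dv[of d "a+1" "3+a" 2]) simp
          then have dd: "d = 2" using d2 dvd_imp_le[of d 2] by simp
          have "\<not> d dvd 4 + a"
          proof
            assume "d dvd 4 + a" with da have "d dvd 3" by (rule dv[of d "a+1" "4+a" 3]) simp
            then show False using dd by simp
          qed
          then have "m dvd 4 + a - g" using gp[of 4] m5 by simp
          with M2 have "m dvd 2" by (rule dv[of m "2+a-g" "4+a-g" 2]) (use ag in arith)
          then show False using m5 dvd_imp_le[of m 2] by simp
        next
          case False
          then have "m dvd 3 + a - g" using gp[of 3] m5 by simp
          with M2 have "m dvd 1" by (rule dv[of m "2+a-g" "3+a-g" 1]) (use ag in arith)
          then show False using m5 by simp
        qed
      qed
      show ?thesis using mg m4 A2 by simp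
    next
      case False
      then have ag: "a < g" by simp
      have ma: "m dvd a" using struct[OF ag] aS by simp
      have ndm: "\<not> d dvd m"
      proof
        assume "d dvd m" then have "d dvd a" using ma by (rule dvd_trans)
        then have "d = 1" using coprime_common_divisor_nat[OF cop] by simp
        then show False using d2 by simp
      qed
      have "a \<le> m" using desc[OF m_props(2) ndm] by simp
      then have am': "a = m" using am by simp
      have zr: "d dvd z + m" if "g - m < z" "z < g" "\<not> m dvd z" for z
      proof -
        have "z \<notin> S" using struct[OF that(2)] that(3) by simp
        moreover have "z + m \<in> S" using h_up[of "z+m"] that mg by simp
        ultimately show ?thesis using hgap[of z] am' by simp
      qed
      have m3: "m \<le> 3"
      proof (rule ccontr)
        assume "\<not> m \<le> 3" then have m4: "m \<ge> 4" by simp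
        have c1: "m dvd g - 1 \<or> m dvd g - 2"
        proof (rule ccontr)
          assume "\<not> (m dvd g - 1 \<or> m dvd g - 2)"
          then have "d dvd g - 2 + m" "d dvd g - 1 + m" using zr[of "g-1"] zr[of "g-2"] m4 mg by auto
          then have "d dvd 1" by (rule dv[of d "g - 2 + m" "g - 1 + m" 1]) (use mg m4 in arith)
          then show False using d1 by simp
        qed
        have c2: "m dvd g - 2 \<or> m dvd g - 3"
        proof (rule ccontr)
          assume "\<not> (m dvd g - 2 \<or> m dvd g - 3)"
          then have "d dvd g - 3 + m" "d dvd g - 2 + m" using zr[of "g-2"] zr[of "g-3"] m4 mg by auto
          then have "d dvd 1" by (rule dv[of d "g - 3 + m" "g - 2 + m" 1]) (use mg m4 in arith)
          then show False using d1 by simp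
        qed
        have c3: "m dvd g - 2"
        proof (rule ccontr)
          assume "\<not> m dvd g - 2"
          then have "m dvd g - 3" "m dvd g - 1" using c1 c2 by auto
          then have "m dvd 2" by (rule dv[of m "g - 3" "g - 1" 2]) (use mg m4 in arith)
          then show False using m4 dvd_imp_le[of m 2] by simp
        qed
        have n1: "\<not> m dvd g - 1"
        proof
          assume "m dvd g - 1" with c3 have "m dvd 1" by (rule dv[of m "g-2" "g-1" 1]) (use mg m4 in arith)
          then show False using m4 by simp
        qed
        have n3: "\<not> m dvd g - 3"
        proof
          assume "m dvd g - 3" then have "m dvd 1" using c3 by (rule dv[of m "g - 3" "g - 2" 1]) (use mg m4 in arith)
          then show False using m4 by simp
        qed
        have "d dvd g - 3 + m" "d dvd g - 1 + m" using zr[of "g-1"] zr[of "g-3"] n1 n3 m4 mg by auto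
        then have "d dvd 2" by (rule dv[of d "g - 3 + m" "g - 1 + m" 2]) (use mg m4 in arith)
        then have dd: "d = 2" using d2 dvd_imp_le[of d 2] by simp
        show False
        proof (cases "m = 4")
          case True then show False using ndm dd by simp
        next
          case False
          then have m5: "m \<ge> 5" using m4 by simp
          have n4: "\<not> m dvd g - 4"
          proof
            assume "m dvd g - 4" then have "m dvd 2" using c3 by (rule dv[of m "g - 4" "g - 2" 2]) (use mg m5 in arith)
            then show False using m5 dvd_imp_le[of m 2] by simp
          qed
          have "d dvd g - 4 + m" "d dvd g - 3 + m" using zr[of "g-4"] zr[of "g-3"] n4 n3 m5 mg by auto
          then have "d dvd 1" by (rule dv[of d "g - 4 + m" "g - 3 + m" 1]) (use mg m5 in arith)
          then show False using d1 by simp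
        qed
      qed
      have "m dvd g - 1"
      proof (cases "m = 2")
        case True then show ?thesis using m_ndvd_g g1 by presburger
      next
        case False
        then have m3': "m = 3" using m3 m2 by simp
        show ?thesis
        proof (rule ccontr)
          assume nd: "\<not> m dvd g - 1"
          have g2: "3 dvd g - 2" using nd m_ndvd_g m3' mg by presburger
          have e1: "d dvd g + 2" using zr[of "g-1"] nd m3' mg by simp
          have e2: "d dvd 2 * g + 1"
          proof (rule ccontr)
            assume "\<not> d dvd 2 * g + 1"
            then have "2 * g + 1 - a \<in> S" using desc[of "2*g+1"] big by simp
            moreover have "2 * g + 1 - a = (g - 2) + g" using am' m3' mg by simp
            ultimately have "(g - 2) + g \<in> S" by metis
            moreover have "g - 2 \<in> S" using struct[of "g - 2"] g2 m3' mg by simp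
            moreover have "g - 2 < g" using mg by simp
            ultimately show False using rf[of "g-2"] by blast
          qed
          have "d dvd 2 * g + 4" using e1 by (metis dvd_mult mult_2 add_mult_distrib2 mult.commute numeral_Bit0)
          with e2 have "d dvd 3" by (rule dv[of d "2*g+1" "2*g+4" 3]) simp
          then have "d = 3" using d2 dvd_imp_le[of d 3] by (cases "d = 2") auto
          then show False using ndm m3' by simp
        qed
      qed
      then show ?thesis using mg m3 by simp
    qed
  qed
qed

end



context reflS
begin
lemma memb: assumes "m < g"
  shows "x \<in> S \<longleftrightarrow> (x < g \<and> m dvd x) \<or> (g \<le> x \<and> x < 2*g \<and> \<not> m dvd (x - g)) \<or> 2*g \<le> x"
proof (cases "x < g")
  case True then show ?thesis using struct by simp
next
  case False
  show ?thesis
  proof (cases "x < 2*g")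
    case True
    then have "x \<in> S \<longleftrightarrow> x - g \<notin> S" using upper False by simp
    also have "\<dots> \<longleftrightarrow> \<not> m dvd (x - g)" using struct[of "x-g"] True False by simp
    finally show ?thesis using True False by simp
  next
    case False then show ?thesis using big by simp
  qed
qed
end

lemma wit: "(p::nat) dvd x - c \<Longrightarrow> c \<le> x \<Longrightarrow> x = (x - c) div p * p + c"
  by simp

lemma wit2: "(x::nat) = A + c \<Longrightarrow> c = d \<Longrightarrow> x = A + d" by simp

lemma gen_in: "a \<in> A \<Longrightarrow> b \<in> A \<Longrightarrow> i * a + j * b \<in> gen A"
  using gen_closed gen_mult by blast

lemma fam2: "gen {2, 4*n+3} = {x::nat. even x \<or> 4*n+3 \<le> x}"
proof
  show "gen {2, 4*n+3} \<subseteq> {x::nat. even x \<or> 4*n+3 \<le> x}"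
  proof
    fix x assume "x \<in> gen {2, 4*n+3}"
    then show "x \<in> {x::nat. even x \<or> 4*n+3 \<le> x}"
      by (induction x rule: gen.induct) auto
  qed
  show "{x::nat. even x \<or> 4*n+3 \<le> x} \<subseteq> gen {2, 4*n+3}"
  proof
    fix x :: nat assume "x \<in> {x::nat. even x \<or> 4*n+3 \<le> x}"
    then obtain i j where "x = i * 2 + j * (4*n+3)"
    proof (cases "even x")
      case True then show ?thesis using that[of "x div 2" 0] by simp
    next
      case False
      then have "4*n+3 \<le> x" using \<open>x \<in> _\<close> by simp
      moreover have "2 dvd x - (4*n+3)" using False \<open>4*n+3 \<le> x\<close> by presburger
      ultimately have "x = (x - (4*n+3)) div 2 * 2 + 1 * (4*n+3)" using wit by simp
      then show ?thesis using that by blast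
    qed
    then show "x \<in> gen {2, 4*n+3}" using gen_in[of 2 "{2, 4*n+3}" "4*n+3"] by simp
  qed
qed

lemma fam3: "gen {3, 3*n+2} = {x::nat. x mod 3 = 0 \<or> (x mod 3 = 2 \<and> 3*n+2 \<le> x) \<or> (x mod 3 = 1 \<and> 6*n+4 \<le> x)}"
proof
  show "gen {3, 3*n+2} \<subseteq> {x::nat. x mod 3 = 0 \<or> (x mod 3 = 2 \<and> 3*n+2 \<le> x) \<or> (x mod 3 = 1 \<and> 6*n+4 \<le> x)}"
  proof
    fix x assume "x \<in> gen {3, 3*n+2}"
    then show "x \<in> {x::nat. x mod 3 = 0 \<or> (x mod 3 = 2 \<and> 3*n+2 \<le> x) \<or> (x mod 3 = 1 \<and> 6*n+4 \<le> x)}"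
      by (induction x rule: gen.induct) (auto, presburger+)
  qed
  show "{x::nat. x mod 3 = 0 \<or> (x mod 3 = 2 \<and> 3*n+2 \<le> x) \<or> (x mod 3 = 1 \<and> 6*n+4 \<le> x)} \<subseteq> gen {3, 3*n+2}"
  proof
    fix x :: nat assume x: "x \<in> {x::nat. x mod 3 = 0 \<or> (x mod 3 = 2 \<and> 3*n+2 \<le> x) \<or> (x mod 3 = 1 \<and> 6*n+4 \<le> x)}"
    have "\<exists>i j. x = i * 3 + j * (3*n+2)"
    proof -
      consider "x mod 3 = 0" | "x mod 3 = 2 \<and> 3*n+2 \<le> x" | "x mod 3 = 1 \<and> 6*n+4 \<le> x" using x by auto
      then show ?thesis
      proof cases
        case 1 then have "3 dvd x - 0" by presburger
        then have "x = (x - 0) div 3 * 3 + 0 * (3*n+2)" using wit[of 3 x 0] by simp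
        then show ?thesis by blast
      next
        case 2 then have "3 dvd x - (3*n+2)" by presburger
        then have "x = (x - (3*n+2)) div 3 * 3 + 1 * (3*n+2)" using wit[of 3 x "3*n+2"] 2 by simp
        then show ?thesis by blast
      next
        case 3 then have "3 dvd x - (6*n+4)" by presburger
        then have "x = (x - (6*n+4)) div 3 * 3 + (6*n+4)" using wit[of 3 x "6*n+4"] 3 by blast
        then have "x = (x - (6*n+4)) div 3 * 3 + 2 * (3*n+2)" by (rule wit2) simp
        then show ?thesis by blast
      qed
    qed
    then obtain i j where "x = i * 3 + j * (3*n+2)" by blast
    then show "x \<in> gen {3, 3*n+2}" using gen_in[of 3 "{3, 3*n+2}" "3*n+2"] by simp
  qed
qed

lemma gen_in3: "a \<in> A \<Longrightarrow> b \<in> A \<Longrightarrow> c \<in> A \<Longrightarrow> i * a + j * b + k * c \<in> gen A"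
  using gen_closed gen_mult by blast

lemma fam4: "gen {4, 4*n+2, 4*n+3} = {x::nat. x mod 4 = 0 \<or> (x mod 4 = 2 \<and> 4*n+2 \<le> x)
   \<or> (x mod 4 = 3 \<and> 4*n+3 \<le> x) \<or> (x mod 4 = 1 \<and> 8*n+5 \<le> x)}"
proof
  show "gen {4, 4*n+2, 4*n+3} \<subseteq> {x::nat. x mod 4 = 0 \<or> (x mod 4 = 2 \<and> 4*n+2 \<le> x)
   \<or> (x mod 4 = 3 \<and> 4*n+3 \<le> x) \<or> (x mod 4 = 1 \<and> 8*n+5 \<le> x)}"
  proof
    fix x assume "x \<in> gen {4, 4*n+2, 4*n+3}"
    then show "x \<in> {x::nat. x mod 4 = 0 \<or> (x mod 4 = 2 \<and> 4*n+2 \<le> x)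
   \<or> (x mod 4 = 3 \<and> 4*n+3 \<le> x) \<or> (x mod 4 = 1 \<and> 8*n+5 \<le> x)}"
      by (induction x rule: gen.induct) (auto, presburger+)
  qed
  show "{x::nat. x mod 4 = 0 \<or> (x mod 4 = 2 \<and> 4*n+2 \<le> x)
   \<or> (x mod 4 = 3 \<and> 4*n+3 \<le> x) \<or> (x mod 4 = 1 \<and> 8*n+5 \<le> x)} \<subseteq> gen {4, 4*n+2, 4*n+3}"
  proof
    fix x :: nat assume x: "x \<in> {x::nat. x mod 4 = 0 \<or> (x mod 4 = 2 \<and> 4*n+2 \<le> x)
   \<or> (x mod 4 = 3 \<and> 4*n+3 \<le> x) \<or> (x mod 4 = 1 \<and> 8*n+5 \<le> x)}"
    have "\<exists>i j k. x = i * 4 + j * (4*n+2) + k * (4*n+3)"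
    proof -
      consider "x mod 4 = 0" | "x mod 4 = 2 \<and> 4*n+2 \<le> x" | "x mod 4 = 3 \<and> 4*n+3 \<le> x" | "x mod 4 = 1 \<and> 8*n+5 \<le> x" using x by auto
      then show ?thesis
      proof cases
        case 1 then have "4 dvd x - 0" by presburger
        then have "x = (x - 0) div 4 * 4 + 0 * (4*n+2) + 0 * (4*n+3)" using wit[of 4 x 0] by simp
        then show ?thesis by blast
      next
        case 2 then have "4 dvd x - (4*n+2)" by presburger
        then have "x = (x - (4*n+2)) div 4 * 4 + 1 * (4*n+2) + 0 * (4*n+3)" using wit[of 4 x "4*n+2"] 2 by simp
        then show ?thesis by blast
      next
        case 3 then have "4 dvd x - (4*n+3)" by presburger
        then have "x = (x - (4*n+3)) div 4 * 4 + 0 * (4*n+2) + 1 * (4*n+3)" using wit[of 4 x "4*n+3"] 3 by simp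
        then show ?thesis by blast
      next
        case 4 then have "4 dvd x - (8*n+5)" by presburger
        then have "x = (x - (8*n+5)) div 4 * 4 + (8*n+5)" using wit[of 4 x "8*n+5"] 4 by blast
        then have "x = (x - (8*n+5)) div 4 * 4 + (1 * (4*n+2) + 1 * (4*n+3))" by (rule wit2) simp
        then have "x = (x - (8*n+5)) div 4 * 4 + 1 * (4*n+2) + 1 * (4*n+3)" by (simp only: add.assoc)
        then show ?thesis by blast
      qed
    qed
    then obtain i j k where "x = i * 4 + j * (4*n+2) + k * (4*n+3)" by blast
    then show "x \<in> gen {4, 4*n+2, 4*n+3}" using gen_in3[of 4 "{4, 4*n+2, 4*n+3}" "4*n+2" "4*n+3"] by simp
  qed
qed



lemma minimal_from:
  assumes "gen A = S" "\<And>e. e \<in> A \<Longrightarrow> e \<notin> gen (A - {e})"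
  shows "minimal_generating_set A S"
  unfolding minimal_generating_set_def
proof (intro conjI allI impI)
  show "gen A = S" by fact
  fix B assume "B \<subset> A"
  then obtain e where e: "e \<in> A" "e \<notin> B" by blast
  then have "B \<subseteq> A - {e}" using \<open>B \<subset> A\<close> by blast
  then have "gen B \<subseteq> gen (A - {e})" by (rule gen_mono)
  moreover have "e \<in> S" using assms(1) gen_base[OF e(1)] by simp
  ultimately show "gen B \<noteq> S" using assms(2)[OF e(1)] by blast
qed

lemma nm_dvd: "(\<forall>a\<in>B. p dvd a) \<Longrightarrow> \<not> p dvd e \<Longrightarrow> e \<notin> gen B"
  using gen_dvd by blast

lemma nm_ge: assumes "\<forall>b\<in>B. c \<le> b" "x \<in> gen B" shows "x = 0 \<or> c \<le> x"
  using assms(2) by (induction x rule: gen.induct) (use assms(1) in auto)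

lemma nm_42: "4*n+2 \<notin> gen {4, 4*n+3}"
proof
  assume "4*n+2 \<in> gen {4, 4*n+3}"
  moreover have "x mod 4 = 0 \<or> (x mod 4 = 3 \<and> 4*n+3 \<le> x) \<or> 8*n+6 \<le> x" if "x \<in> gen {4, 4*n+3}" for x :: nat
    using that
  proof (induction x rule: gen.induct)
    case gen_zero then show ?case by simp
  next
    case (gen_add a x)
    from gen_add.hyps(1) have "a = 4 \<or> a = 4*n+3" by simp
    then show ?case using gen_add.IH by (elim disjE) presburger+
  qed
  ultimately have "(4*n+2) mod 4 = 0 \<or> ((4*n+2) mod 4 = 3 \<and> 4*n+3 \<le> 4*n+2) \<or> 8*n+6 \<le> 4*n+(2::nat)" by blast
  then show False by presburger
qed

lemma tel2: "telescopic_set {2, 4*n+3}"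
proof -
  have g: "gcd (2::nat) (4*n+3) = 1"
  proof - have "gcd (2::nat) ((2*n) * 2 + 3) = gcd 2 3" by (rule gcd_add_mult) then show ?thesis by (simp add: algebra_simps) qed
  have "telescopic_seq [2, 4*n+3]"
    unfolding telescopic_seq_def
  proof (intro allI impI)
    fix j :: nat assume "2 \<le> j \<and> j \<le> length [2, 4*n+3]"
    then have j: "j = 2" by simp
    have "(4*n+3) * 2 \<in> gen {2}" by (rule gen_mult) simp
    then show "(seq_gcd [2, 4*n+3] (j - 1) div seq_gcd [2, 4*n+3] j) * ([2, 4*n+3] ! (j - 1))
        \<in> gen (set (take (j - 1) [2, 4*n+3]))"
      using g unfolding j seq_gcd_def by (simp add: mult.commute)
  qed
  then show ?thesis unfolding telescopic_set_def
    by (intro exI[of _ "[2, 4*n+3]"]) auto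
qed

lemma tel3: "telescopic_set {3, 3*n+2}"
proof -
  have g: "gcd (3::nat) (3*n+2) = 1"
  proof - have "gcd (3::nat) (n * 3 + 2) = gcd 3 2" by (rule gcd_add_mult) then show ?thesis by (simp add: algebra_simps) qed
  have "telescopic_seq [3, 3*n+2]"
    unfolding telescopic_seq_def
  proof (intro allI impI)
    fix j :: nat assume "2 \<le> j \<and> j \<le> length [3, 3*n+2]"
    then have j: "j = 2" by simp
    have "(3*n+2) * 3 \<in> gen {3}" by (rule gen_mult) simp
    then show "(seq_gcd [3, 3*n+2] (j - 1) div seq_gcd [3, 3*n+2] j) * ([3, 3*n+2] ! (j - 1))
        \<in> gen (set (take (j - 1) [3, 3*n+2]))"
      using g unfolding j seq_gcd_def by (simp add: mult.commute)
  qed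
  then show ?thesis unfolding telescopic_set_def
    by (intro exI[of _ "[3, 3*n+2]"]) auto
qed

lemma tel4: "telescopic_set {4, 4*n+2, 4*n+3}"
proof -
  have g1: "gcd (4::nat) (4*n+2) = 2"
  proof - have "gcd (4::nat) (n * 4 + 2) = gcd 4 2" by (rule gcd_add_mult) then show ?thesis by (simp add: algebra_simps) qed
  have g2: "gcd (4*n+2) (4*n+3) = (1::nat)"
  proof -
    have "coprime (4*n+2) (Suc (4*n+2))" by (rule coprime_Suc_right_nat)
    moreover have "Suc (4*n+2) = 4*n+3" by simp
    ultimately have "coprime (4*n+2) (4*n+(3::nat))" by metis
    then show ?thesis using coprime_iff_gcd_eq_1 by blast
  qed
  define as where "as = [4, 4*n+2, 4*n+3]"
  have s1: "seq_gcd as 1 = 4" unfolding as_def seq_gcd_def by simp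
  have s2: "seq_gcd as 2 = 2" unfolding as_def seq_gcd_def using g1 by simp
  have s3: "seq_gcd as 3 = 1" unfolding as_def seq_gcd_def using g2 by simp
  have "telescopic_seq as"
    unfolding telescopic_seq_def
  proof (intro allI impI)
    fix j :: nat assume "2 \<le> j \<and> j \<le> length as"
    then have j: "j = 2 \<or> j = 3" unfolding as_def by auto
    show "(seq_gcd as (j - 1) div seq_gcd as j) * (as ! (j - 1)) \<in> gen (set (take (j - 1) as))"
    proof (cases "j = 2")
      case True
      have "(2*n+1) * 4 \<in> gen {4}" by (rule gen_mult) simp
      moreover have "(2*n+1) * 4 = (4 div 2) * (4*n+2)" by simp
      ultimately show ?thesis using s1 s2 True unfolding as_def by (simp only: as_def[symmetric]) (simp add: as_def)
    next
      case False
      then have j3: "j = 3" using j by simp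
      have "(n+1) * 4 + 1 * (4*n+2) \<in> gen {4, 4*n+2}" by (rule gen_in) simp_all
      then show ?thesis using s2 s3 j3 unfolding as_def by (simp add: algebra_simps)
    qed
  qed
  then show ?thesis unfolding telescopic_set_def as_def
    by (intro exI[of _ "[4, 4*n+2, 4*n+3]"]) auto
qed

lemma tel1: "telescopic_set {1}"
  unfolding telescopic_set_def telescopic_seq_def
  by (intro exI[of _ "[1]"]) auto



lemma reg_split:
  fixes x g :: nat
  assumes "x < g \<Longrightarrow> P x = A" "\<And>y. y < g \<Longrightarrow> x = g + y \<Longrightarrow> P x = B y" "2*g \<le> x \<Longrightarrow> P x"
  shows "((x < g \<and> A) \<or> (g \<le> x \<and> x < 2*g \<and> B (x - g)) \<or> 2*g \<le> x) \<longleftrightarrow> P x"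
proof (cases "x < g")
  case True then show ?thesis using assms(1) by auto
next
  case False
  show ?thesis
  proof (cases "x < 2*g")
    case True
    have "P x = B (x - g)" using assms(2)[of "x - g"] False True by simp
    then show ?thesis using False True by auto
  next
    case False then show ?thesis using assms(3) by auto
  qed
qed

lemma reg2: "(((x::nat) < 2*n+1 \<and> 2 dvd x) \<or> (2*n+1 \<le> x \<and> x < 2*(2*n+1) \<and> \<not> 2 dvd (x - (2*n+1))) \<or> 2*(2*n+1) \<le> x)
   \<longleftrightarrow> even x \<or> 4*n+3 \<le> x"
proof (rule reg_split[where P = "\<lambda>x. even x \<or> 4*n+3 \<le> x"])
  show "x < 2*n+1 \<Longrightarrow> (even x \<or> 4*n+3 \<le> x) = (2 dvd x)" by auto
  show "\<And>y. y < 2*n+1 \<Longrightarrow> x = 2*n+1 + y \<Longrightarrow> (even x \<or> 4*n+3 \<le> x) = (\<not> 2 dvd y)" by auto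
  show "2*(2*n+1) \<le> x \<Longrightarrow> even x \<or> 4*n+3 \<le> x" by presburger
qed

lemma reg3: "(((x::nat) < 3*n+1 \<and> 3 dvd x) \<or> (3*n+1 \<le> x \<and> x < 2*(3*n+1) \<and> \<not> 3 dvd (x - (3*n+1))) \<or> 2*(3*n+1) \<le> x)
   \<longleftrightarrow> x mod 3 = 0 \<or> (x mod 3 = 2 \<and> 3*n+2 \<le> x) \<or> (x mod 3 = 1 \<and> 6*n+4 \<le> x)"
proof (rule reg_split[where P = "\<lambda>x. x mod 3 = 0 \<or> (x mod 3 = 2 \<and> 3*n+2 \<le> x) \<or> (x mod 3 = 1 \<and> 6*n+4 \<le> x)"])
  show "x < 3*n+1 \<Longrightarrow> (x mod 3 = 0 \<or> (x mod 3 = 2 \<and> 3*n+2 \<le> x) \<or> (x mod 3 = 1 \<and> 6*n+4 \<le> x)) = (3 dvd x)"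
    by (auto simp: dvd_eq_mod_eq_0)
  show "\<And>y. y < 3*n+1 \<Longrightarrow> x = 3*n+1 + y \<Longrightarrow> (x mod 3 = 0 \<or> (x mod 3 = 2 \<and> 3*n+2 \<le> x) \<or> (x mod 3 = 1 \<and> 6*n+4 \<le> x)) = (\<not> 3 dvd y)"
    by (simp add: dvd_eq_mod_eq_0 mod_add_eq[symmetric] mod_Suc) (auto simp: mod_Suc)
  show "2*(3*n+1) \<le> x \<Longrightarrow> x mod 3 = 0 \<or> (x mod 3 = 2 \<and> 3*n+2 \<le> x) \<or> (x mod 3 = 1 \<and> 6*n+4 \<le> x)" by presburger
qed

lemma reg4: "(((x::nat) < 4*n+1 \<and> 4 dvd x) \<or> (4*n+1 \<le> x \<and> x < 2*(4*n+1) \<and> \<not> 4 dvd (x - (4*n+1))) \<or> 2*(4*n+1) \<le> x)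
   \<longleftrightarrow> x mod 4 = 0 \<or> (x mod 4 = 2 \<and> 4*n+2 \<le> x)
             \<or> (x mod 4 = 3 \<and> 4*n+3 \<le> x) \<or> (x mod 4 = 1 \<and> 8*n+5 \<le> x)"
proof (rule reg_split[where P = "\<lambda>x. x mod 4 = 0 \<or> (x mod 4 = 2 \<and> 4*n+2 \<le> x)
             \<or> (x mod 4 = 3 \<and> 4*n+3 \<le> x) \<or> (x mod 4 = 1 \<and> 8*n+5 \<le> x)"])
  show "x < 4*n+1 \<Longrightarrow> (x mod 4 = 0 \<or> (x mod 4 = 2 \<and> 4*n+2 \<le> x)
             \<or> (x mod 4 = 3 \<and> 4*n+3 \<le> x) \<or> (x mod 4 = 1 \<and> 8*n+5 \<le> x)) = (4 dvd x)"
    by (auto simp: dvd_eq_mod_eq_0)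
  show "\<And>y. y < 4*n+1 \<Longrightarrow> x = 4*n+1 + y \<Longrightarrow> (x mod 4 = 0 \<or> (x mod 4 = 2 \<and> 4*n+2 \<le> x)
             \<or> (x mod 4 = 3 \<and> 4*n+3 \<le> x) \<or> (x mod 4 = 1 \<and> 8*n+5 \<le> x)) = (\<not> 4 dvd y)"
    by (simp add: dvd_eq_mod_eq_0 mod_add_eq[symmetric] mod_Suc) (auto simp: mod_Suc)
  show "2*(4*n+1) \<le> x \<Longrightarrow> x mod 4 = 0 \<or> (x mod 4 = 2 \<and> 4*n+2 \<le> x)
             \<or> (x mod 4 = 3 \<and> 4*n+3 \<le> x) \<or> (x mod 4 = 1 \<and> 8*n+5 \<le> x)" by presburger
qed

lemma pack2: "S = gen {2, 4*n+3} \<Longrightarrow> telescopic_set {2, 4*n+3} \<and> minimal_generating_set {2, 4*n+3} S"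
proof
  assume S: "S = gen {2, 4*n+3}"
  show "telescopic_set {2, 4*n+3}" by (rule tel2)
  show "minimal_generating_set {2, 4*n+3} S"
  proof (rule minimal_from)
    show "gen {2, 4*n+3} = S" using S by simp
    fix e assume "e \<in> {2, 4*n+(3::nat)}"
    then consider "e = 2" | "e = 4*n+3" by blast
    then show "e \<notin> gen ({2, 4*n+3} - {e})"
    proof cases
      case 1
      have "{2, 4*n+3} - {e} = {4*n+(3::nat)}" using 1 by auto
      moreover have "2 \<notin> gen {4*n+(3::nat)}" using nm_ge[of "{4*n+3}" 3 2] by auto
      ultimately show ?thesis using 1 by simp
    next
      case 2
      have "{2, 4*n+3} - {e} = {2::nat}" using 2 by auto
      moreover have "4*n+3 \<notin> gen {2::nat}" by (rule nm_dvd[where p=2]) (simp, presburger)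
      ultimately show ?thesis using 2 by simp
    qed
  qed
qed

lemma pack3: "1 \<le> n \<Longrightarrow> S = gen {3, 3*n+2} \<Longrightarrow> telescopic_set {3, 3*n+2} \<and> minimal_generating_set {3, 3*n+2} S"
proof
  assume n: "1 \<le> n" and S: "S = gen {3, 3*n+2}"
  show "telescopic_set {3, 3*n+2}" by (rule tel3)
  show "minimal_generating_set {3, 3*n+2} S"
  proof (rule minimal_from)
    show "gen {3, 3*n+2} = S" using S by simp
    fix e assume "e \<in> {3, 3*n+(2::nat)}"
    then consider "e = 3" | "e = 3*n+2" by blast
    then show "e \<notin> gen ({3, 3*n+2} - {e})"
    proof cases
      case 1
      have "{3, 3*n+2} - {e} = {3*n+(2::nat)}" using 1 by auto
      moreover have "3 \<notin> gen {3*n+(2::nat)}" using nm_ge[of "{3*n+2}" 5 3] n by auto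
      ultimately show ?thesis using 1 by simp
    next
      case 2
      have "{3, 3*n+2} - {e} = {3::nat}" using 2 by auto
      moreover have "3*n+2 \<notin> gen {3::nat}" by (rule nm_dvd[where p=3]) (simp, presburger)
      ultimately show ?thesis using 2 by simp
    qed
  qed
qed

lemma pack4: "1 \<le> n \<Longrightarrow> S = gen {4, 4*n+2, 4*n+3} \<Longrightarrow> telescopic_set {4, 4*n+2, 4*n+3} \<and> minimal_generating_set {4, 4*n+2, 4*n+3} S"
proof
  assume n: "1 \<le> n" and S: "S = gen {4, 4*n+2, 4*n+3}"
  show "telescopic_set {4, 4*n+2, 4*n+3}" by (rule tel4)
  show "minimal_generating_set {4, 4*n+2, 4*n+3} S"
  proof (rule minimal_from)
    show "gen {4, 4*n+2, 4*n+3} = S" using S by simp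
    fix e assume "e \<in> {4, 4*n+2, 4*n+(3::nat)}"
    then consider "e = 4" | "e = 4*n+2" | "e = 4*n+3" by blast
    then show "e \<notin> gen ({4, 4*n+2, 4*n+3} - {e})"
    proof cases
      case 1
      have "{4, 4*n+2, 4*n+3} - {e} = {4*n+2, 4*n+(3::nat)}" using 1 n by auto
      moreover have "4 \<notin> gen {4*n+2, 4*n+(3::nat)}" using nm_ge[of "{4*n+2, 4*n+3}" 6 4] n by auto
      ultimately show ?thesis using 1 by simp
    next
      case 2
      have "{4, 4*n+2, 4*n+3} - {e} = {4, 4*n+(3::nat)}" using 2 n by auto
      then show ?thesis using 2 nm_42[of n] by simp
    next
      case 3
      have "{4, 4*n+2, 4*n+3} - {e} = {4, 4*n+(2::nat)}" using 3 by auto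
      moreover have "4*n+3 \<notin> gen {4, 4*n+(2::nat)}" by (rule nm_dvd[where p=2]) (simp, presburger)
      ultimately show ?thesis using 3 by simp
    qed
  qed
qed

lemma res1: "telescopic_set {1} \<Longrightarrow> minimal_generating_set {1} S \<Longrightarrow> genus S = 0 \<Longrightarrow> (\<exists>A. telescopic_set A \<and> minimal_generating_set A S \<and>
     ((A = {1} \<and> genus S = 0)
      \<or> (\<exists>n::nat. A = {2, 4*n+3} \<and> genus S = 2*n+1)
      \<or> (\<exists>n::nat. A = {3, 3*n+2} \<and> genus S = 3*n+1)
      \<or> (\<exists>n::nat. A = {4, 4*n+2, 4*n+3} \<and> genus S = 4*n+1)))"
proof -
  assume a: "telescopic_set {1}" "minimal_generating_set {1} S" "genus S = 0"
  show ?thesis by (rule exI[of _ "{1}"]) (use a in simp)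
qed

lemma res2: "telescopic_set {2, 4*n+3} \<and> minimal_generating_set {2, 4*n+3} S \<Longrightarrow> genus S = 2*n+1 \<Longrightarrow> (\<exists>A. telescopic_set A \<and> minimal_generating_set A S \<and>
     ((A = {1} \<and> genus S = 0)
      \<or> (\<exists>n::nat. A = {2, 4*n+3} \<and> genus S = 2*n+1)
      \<or> (\<exists>n::nat. A = {3, 3*n+2} \<and> genus S = 3*n+1)
      \<or> (\<exists>n::nat. A = {4, 4*n+2, 4*n+3} \<and> genus S = 4*n+1)))"
proof -
  assume a: "telescopic_set {2, 4*n+3} \<and> minimal_generating_set {2, 4*n+3} S" "genus S = 2*n+1"
  have "\<exists>n'::nat. {2, 4*n+3} = {2, 4*n'+3} \<and> genus S = 2*n'+1" using a(2) by blast
  then show ?thesis using a(1) by (intro exI[of _ "{2, 4*n+3}"]) blast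
qed

lemma res3: "telescopic_set {3, 3*n+2} \<and> minimal_generating_set {3, 3*n+2} S \<Longrightarrow> genus S = 3*n+1 \<Longrightarrow> (\<exists>A. telescopic_set A \<and> minimal_generating_set A S \<and>
     ((A = {1} \<and> genus S = 0)
      \<or> (\<exists>n::nat. A = {2, 4*n+3} \<and> genus S = 2*n+1)
      \<or> (\<exists>n::nat. A = {3, 3*n+2} \<and> genus S = 3*n+1)
      \<or> (\<exists>n::nat. A = {4, 4*n+2, 4*n+3} \<and> genus S = 4*n+1)))"
proof -
  assume a: "telescopic_set {3, 3*n+2} \<and> minimal_generating_set {3, 3*n+2} S" "genus S = 3*n+1"
  have "\<exists>n'::nat. {3, 3*n+2} = {3, 3*n'+2} \<and> genus S = 3*n'+1" using a(2) by blast
  then show ?thesis using a(1) by (intro exI[of _ "{3, 3*n+2}"]) blast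
qed

lemma res4: "telescopic_set {4, 4*n+2, 4*n+3} \<and> minimal_generating_set {4, 4*n+2, 4*n+3} S \<Longrightarrow> genus S = 4*n+1 \<Longrightarrow> (\<exists>A. telescopic_set A \<and> minimal_generating_set A S \<and>
     ((A = {1} \<and> genus S = 0)
      \<or> (\<exists>n::nat. A = {2, 4*n+3} \<and> genus S = 2*n+1)
      \<or> (\<exists>n::nat. A = {3, 3*n+2} \<and> genus S = 3*n+1)
      \<or> (\<exists>n::nat. A = {4, 4*n+2, 4*n+3} \<and> genus S = 4*n+1)))"
proof -
  assume a: "telescopic_set {4, 4*n+2, 4*n+3} \<and> minimal_generating_set {4, 4*n+2, 4*n+3} S" "genus S = 4*n+1"
  have "\<exists>n'::nat. {4, 4*n+2, 4*n+3} = {4, 4*n'+2, 4*n'+3} \<and> genus S = 4*n'+1" using a(2) by blast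
  then show ?thesis using a(1) by (intro exI[of _ "{4, 4*n+2, 4*n+3}"]) blast
qed

theorem mainTheorem13:
  fixes S :: "nat set"
  assumes "numerical_semigroup S" and "free_semigroup S" and "reflective S"
  shows "\<exists>A. telescopic_set A \<and> minimal_generating_set A S \<and>
     ((A = {1} \<and> genus S = 0)
      \<or> (\<exists>n::nat. A = {2, 4*n+3} \<and> genus S = 2*n+1)
      \<or> (\<exists>n::nat. A = {3, 3*n+2} \<and> genus S = 3*n+1)
      \<or> (\<exists>n::nat. A = {4, 4*n+2, 4*n+3} \<and> genus S = 4*n+1))"
proof -
  have S0: "0 \<in> S" and Scl: "\<And>x y. x \<in> S \<Longrightarrow> y \<in> S \<Longrightarrow> x + y \<in> S" and fin: "finite (UNIV - S)"
    using assms(1) unfolding numerical_semigroup_def by auto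
  show ?thesis
  proof (cases "S = UNIV")
    case True
    have g1: "gen {1} = UNIV"
    proof -
      have "x \<in> gen {1}" for x :: nat using gen_mult[of 1 "{1}" x] by simp
      then show ?thesis by auto
    qed
    have "minimal_generating_set {1} S"
    proof (rule minimal_from)
      show "gen {1} = S" using g1 True by simp
      fix e assume "e \<in> {1::nat}"
      then show "e \<notin> gen ({1} - {e})" using nm_ge[of "{}" 2 1] by auto
    qed
    moreover have "genus S = 0" unfolding genus_def using True by simp
    ultimately show ?thesis using tel1 by (intro res1)
  next
    case False
    define g where "g = genus S"
    have gr: "g \<ge> 1 \<and> (\<forall>z < g. (z \<in> S) \<noteq> (z + g \<in> S))"
      using assms(3) False unfolding reflective_def g_def by auto
    interpret reflS S g
    proof
      show "0 \<in> S" by (rule S0)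
      show "\<And>x y. x \<in> S \<Longrightarrow> y \<in> S \<Longrightarrow> x + y \<in> S" by (rule Scl)
      show "finite (UNIV - S)" by (rule fin)
      show "g = card (UNIV - S)" unfolding g_def genus_def ..
      show "1 \<le> g" using gr by simp
      show "\<And>z. z < g \<Longrightarrow> (z \<in> S) \<noteq> (z + g \<in> S)" using gr by simp
    qed
    obtain A where "telescopic_set A" and SA: "S = gen A"
      using assms(2) unfolding free_semigroup_def by blast
    then obtain as where tel: "telescopic_seq as" and Aas: "set as = A"
      unfolding telescopic_set_def by blast
    have Sas: "S = gen (set as)" using SA Aas by simp
    have Gcd1: "Gcd (set as) = 1"
    proof -
      have all: "\<forall>b\<in>set as. Gcd (set as) dvd b" by (auto intro: Gcd_dvd)
      have "Gcd (set as) dvd 2*g" using gen_dvd[OF all] big[of "2*g"] Sas by simp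
      moreover have "Gcd (set as) dvd 2*g + 1" using gen_dvd[OF all] big[of "2*g+1"] Sas by simp
      ultimately have "Gcd (set as) dvd 1" by (rule dv) simp
      then show ?thesis by simp
    qed
    have n1: "1 \<notin> set as"
    proof
      assume "1 \<in> set as"
      then have "1 \<in> S" using Sas gen_base by blast
      then have "x \<in> S" for x using mult[of 1 x] by simp
      then show False using False by auto
    qed
    obtain d a B where d2: "d \<ge> 2" and cop: "coprime a d" and Bd: "\<forall>b\<in>B. d dvd b"
      and SaB: "gen (set as) = gen (insert a B)"
      using free_decomp[OF tel Gcd1 n1] by blast
    have SaB': "S = gen (insert a B)" using Sas SaB by simp
    have aS: "a \<in> S" using SaB' gen_base[of a "insert a B"] by simp
    have desc: "\<And>s. s \<in> S \<Longrightarrow> \<not> d dvd s \<Longrightarrow> a \<le> s \<and> s - a \<in> S"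
      using gen_descent[OF Bd] SaB' by blast
    have cls: "(g = 1 \<and> g \<le> m) \<or> (m < g \<and> m \<le> 4 \<and> m dvd g - 1)"
      by (rule classify[OF d2 cop aS desc])
    then show ?thesis
    proof
      assume h: "g = 1 \<and> g \<le> m"
      have "S = gen {2, 4*0+3}"
      proof -
        have "x \<in> S \<longleftrightarrow> x \<noteq> 1" for x
        proof (cases "x \<ge> 2")
          case True then show ?thesis using big h by simp
        next
          case False then have "x = 0 \<or> x = 1" by auto
          then show ?thesis using S0 gnot h by auto
        qed
        moreover have "x \<noteq> 1 \<longleftrightarrow> even x \<or> 4*0+3 \<le> x" for x :: nat by presburger
        ultimately show ?thesis unfolding fam2[of 0] by blast
      qed
      then have "telescopic_set {2, 4*0+3} \<and> minimal_generating_set {2, 4*0+3} S" by (rule pack2)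
      moreover have "genus S = 2*0+1" using h g_def by simp
      ultimately show ?thesis by (rule res2)
    next
      assume h: "m < g \<and> m \<le> 4 \<and> m dvd g - 1"
      then have "m dvd g - 1" by simp
      then obtain n where gn: "g - 1 = m * n" by (rule dvdE)
      have gn': "g = m * n + 1" using gn g1 by simp
      have "m \<le> 4" using h by simp
      then have mm: "m = 2 \<or> m = 3 \<or> m = 4" using m2 by linarith
      have mem: "x \<in> S \<longleftrightarrow> (x < g \<and> m dvd x) \<or> (g \<le> x \<and> x < 2*g \<and> \<not> m dvd (x - g)) \<or> 2*g \<le> x" for x
        using memb[of x] h by simp
      from mm show ?thesis
      proof (elim disjE)
        assume m: "m = 2"
        have "S = gen {2, 4*n+3}"
        proof -
          have "x \<in> S \<longleftrightarrow> even x \<or> 4*n+3 \<le> x" for x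
            unfolding mem m gn'[unfolded m] by (rule reg2)
          then show ?thesis unfolding fam2 set_eq_iff mem_Collect_eq by blast
        qed
        moreover have "genus S = 2*n+1" using gn' m g_def by simp
        ultimately show ?thesis using pack2[of S n] res2[of n S] by blast
      next
        assume m: "m = 3"
        have n1: "1 \<le> n"
        proof (rule ccontr)
          assume "\<not> 1 \<le> n" then have "g = 1" using gn' by simp
          then show False using h m by simp
        qed
        have "S = gen {3, 3*n+2}"
        proof -
          have "x \<in> S \<longleftrightarrow> x mod 3 = 0 \<or> (x mod 3 = 2 \<and> 3*n+2 \<le> x) \<or> (x mod 3 = 1 \<and> 6*n+4 \<le> x)" for x
            unfolding mem m gn'[unfolded m] by (rule reg3)
          then show ?thesis unfolding fam3 set_eq_iff mem_Collect_eq by blast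
        qed
        moreover have "genus S = 3*n+1" using gn' m g_def by simp
        ultimately show ?thesis using pack3[OF n1, of S] res3[of n S] by blast
      next
        assume m: "m = 4"
        have n1: "1 \<le> n"
        proof (rule ccontr)
          assume "\<not> 1 \<le> n" then have "g = 1" using gn' by simp
          then show False using h m by simp
        qed
        have "S = gen {4, 4*n+2, 4*n+3}"
        proof -
          have "x \<in> S \<longleftrightarrow> x mod 4 = 0 \<or> (x mod 4 = 2 \<and> 4*n+2 \<le> x)
             \<or> (x mod 4 = 3 \<and> 4*n+3 \<le> x) \<or> (x mod 4 = 1 \<and> 8*n+5 \<le> x)" for x
            unfolding mem m gn'[unfolded m] by (rule reg4)
          then show ?thesis unfolding fam4 set_eq_iff mem_Collect_eq by blast
        qed
        moreover have "genus S = 4*n+1" using gn' m g_def by simp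
        ultimately show ?thesis using pack4[OF n1, of S] res4[of n S] by blast
      qed
    qed
  qed
qed

end
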